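(* Let $\zeta=(\mathfrak k_1,\dots,\mathfrak k_p)$ be a flag of $\mathsf H$-subalgebras and $v\in\mathcal W^\Sigma(\zeta)$. Then for every $t>0$ and every $1\le q\le p$, the metric $\gamma_v(t)$ is a $\mathfrak k_q$-submersion metric.
   Context: $\mathsf G$ compact Lie group, $\mathsf H\subset\mathsf G$ closed, $M=\mathsf G/\mathsf H$ compact connected, $\mathsf G$ acting almost effectively; $Q$ an $\mathrm{Ad}(\mathsf G)$-invariant inner product on $\mathfrak g$, $\mathfrak m$ the $Q$-orthogonal complement of $\mathfrak h$, $Q_{\mathfrak m}=Q|_{\mathfrak m}$; invariant metrics = $\mathrm{Ad}(\mathsf H)$-invariant inner products on $\mathfrak m$. An $\mathsf H$-subalgebra is an $\mathrm{Ad}(\mathsf H)$-invariant Lie subalgebra $\mathfrak k$ with $\mathfrak h\subsetneq\mathfrak k\subsetneq\mathfrak g$; $\mathfrak m_{\mathfrak k}=\mathfrak k\cap\mathfrak m$, $\mathfrak m_{\mathfrak k}^\perp$ its $Q$-orthogonal complement in $\mathfrak m$; $\mathsf K$ denotes the subgroup generated by $\mathsf H$ and the connected Lie subgroup with Lie algebra $\mathfrak k$. An invariant metric $g$ is a $\mathfrak k$-submersion metric if $g(\mathfrak m_{\mathfrak k},\mathfrak m_{\mathfrak k}^\perp)=0$ and $g|_{\mathfrak m_{\mathfrak k}^\perp\times\mathfrak m_{\mathfrak k}^\perp}$ is $\mathrm{Ad}(\mathsf K)$-invariant. A flag of $\mathsf H$-subalgebras is $\zeta=(\mathfrak k_1,\dots,\mathfrak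 k_p)$ with $\mathfrak k_1\subsetneq\dots\subsetneq\mathfrak k_p$. $\mathscr F^{\mathsf G}$: ordered tuples $\varphi=(\mathfrak m_1,\dots,\mathfrak m_\ell)$ of mutually $Q$-orthogonal $\mathrm{Ad}(\mathsf H)$-irreducible invariant subspaces with $\mathfrak m=\bigoplus\mathfrak m_i$; $\mathfrak m_{I'}=\sum_{i\in I'}\mathfrak m_i$; $[I_1I_2I_3]_\varphi=\sum Q([e_\alpha,e_\beta],e_\gamma)^2$ over $e_\alpha\in\mathfrak m_{I_1},e_\beta\in\mathfrak m_{I_2},e_\gamma\in\mathfrak m_{I_3}$ in a $Q$-orthonormal $\varphi$-adapted basis. $\Sigma$: $Q_{\mathfrak m}$-symmetric endomorphisms $v$ of $\mathfrak m$ commuting with $\mathrm{Ad}(\mathsf H)|_{\mathfrak m}$, with $\mathrm{tr}\,v=0$, $\mathrm{tr}\,v^2=1$; $\gamma_v(t)=Q_{\mathfrak m}(e^{tv}\cdot,\cdot)$. A good decomposition for $v$ is $\varphi$ with $v|_{\mathfrak m_i}=v_i\mathrm{Id}$; $\hat v_1<\dots<\hat v_{\ell_v}$ are the distinct eigenvalues and $I^v_s(\varphi)=\{i:v_i=\hat v_s\}$. $\mathcal W^\Sigma(\zeta)$ is the set of $v\in\Sigma$ such that for every good decomposition $\varphi$ for $v$: (i) $\mathfrak k_1=\mathfrak h+\mathfrak m_{I^v_1(\varphi)}$ and $\mathfrak k_q=\mathfrak k_{q-1}+\mathfrak m_{I^v_q(\varphi)}$ for $2\le q\le p$; (ii) for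 every $1\le q\le p$ and all $i,j,k\in\{q,\dots,\ell_v\}$, $[I^v_i(\varphi)I^v_j(\varphi)I^v_k(\varphi)]_\varphi>0$ implies $\hat v_i-\hat v_j-\hat v_k+\hat v_q\le0$. *)

theory Defs
  imports "HOL-Analysis.Analysis"
begin

text \<open>Abstract Lie-algebraic model of the data of a compact homogeneous space G/H.
  The Lie algebra g of G is a Euclidean space type 'g whose inner product is the
  Ad(G)-invariant inner product Q; br is the Lie bracket; h is the Lie algebra of H;
  AdH is the group Ad(H) of linear automorphisms of g.  Indices are 0-based.\<close>

definition op_exp :: "('a::real_normed_vector \<Rightarrow> 'a) \<Rightarrow> 'a \<Rightarrow> 'a" where
  "op_exp L x = (\<Sum>n. (1 / fact n) *\<^sub>R (L ^^ n) x)"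

definition ad :: "('g \<Rightarrow> 'g \<Rightarrow> 'g) \<Rightarrow> 'g \<Rightarrow> 'g \<Rightarrow> 'g" where
  "ad br X = (\<lambda>Y. br X Y)"

definition lie_algebra_Q :: "('g::euclidean_space \<Rightarrow> 'g \<Rightarrow> 'g) \<Rightarrow> bool" where
  "lie_algebra_Q br \<longleftrightarrow>
     (\<forall>x. linear (br x)) \<and> (\<forall>y. linear (\<lambda>x. br x y)) \<and>
     (\<forall>x y. br x y = - br y x) \<and>
     (\<forall>x y z. br x (br y z) + br y (br z x) + br z (br x y) = 0) \<and>
     (\<forall>x y z. br x y \<bullet> z = x \<bullet> br y z)"

definition homog_data :: "('g::euclidean_space \<Rightarrow> 'g \<Rightarrow> 'g) \<Rightarrow> 'g set \<Rightarrow> ('g \<Rightarrow> 'g) set \<Rightarrow> bool" where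
  "homog_data br h AdH \<longleftrightarrow>
     lie_algebra_Q br \<and> subspace h \<and> (\<forall>x\<in>h. \<forall>y\<in>h. br x y \<in> h) \<and>
     id \<in> AdH \<and> (\<forall>A\<in>AdH. \<forall>B\<in>AdH. A \<circ> B \<in> AdH) \<and>
     (\<forall>A\<in>AdH. linear A \<and> bij A \<and> inv A \<in> AdH \<and> (\<forall>x y. A x \<bullet> A y = x \<bullet> y) \<and>
        (\<forall>x y. A (br x y) = br (A x) (A y)) \<and> A ` h = h) \<and>
     (\<forall>X\<in>h. \<forall>s::real. op_exp (\<lambda>Y. s *\<^sub>R br X Y) \<in> AdH)"

definition mspace :: "'g::euclidean_space set \<Rightarrow> 'g set" where
  "mspace h = {x. \<forall>y\<in>h. x \<bullet> y = 0}"

definition set_sum :: "'g::euclidean_space set \<Rightarrow> 'g set \<Rightarrow> 'g set" where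
  "set_sum A B = {x + y | x y. x \<in> A \<and> y \<in> B}"

definition H_subalgebra :: "('g::euclidean_space \<Rightarrow> 'g \<Rightarrow> 'g) \<Rightarrow> 'g set \<Rightarrow> ('g \<Rightarrow> 'g) set \<Rightarrow> 'g set \<Rightarrow> bool" where
  "H_subalgebra br h AdH k \<longleftrightarrow>
     subspace k \<and> (\<forall>x\<in>k. \<forall>y\<in>k. br x y \<in> k) \<and> (\<forall>A\<in>AdH. A ` k \<subseteq> k) \<and>
     h \<subset> k \<and> k \<subset> UNIV"

definition is_flag :: "('g::euclidean_space \<Rightarrow> 'g \<Rightarrow> 'g) \<Rightarrow> 'g set \<Rightarrow> ('g \<Rightarrow> 'g) set \<Rightarrow> 'g set list \<Rightarrow> bool" where
  "is_flag br h AdH ks \<longleftrightarrow>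
     ks \<noteq> [] \<and> (\<forall>q<length ks. H_subalgebra br h AdH (ks ! q)) \<and>
     (\<forall>q. q + 1 < length ks \<longrightarrow> ks ! q \<subset> ks ! (q + 1))"

definition m_of :: "'g::euclidean_space set \<Rightarrow> 'g set \<Rightarrow> 'g set" where
  "m_of h k = k \<inter> mspace h"

definition m_perp :: "'g::euclidean_space set \<Rightarrow> 'g set \<Rightarrow> 'g set" where
  "m_perp h k = {x \<in> mspace h. \<forall>y\<in>m_of h k. x \<bullet> y = 0}"

definition invariant_metric :: "'g::euclidean_space set \<Rightarrow> ('g \<Rightarrow> 'g) set \<Rightarrow> ('g \<Rightarrow> 'g \<Rightarrow> real) \<Rightarrow> bool" where
  "invariant_metric h AdH g \<longleftrightarrow>
     (\<forall>x\<in>mspace h. \<forall>y\<in>mspace h. \<forall>z\<in>mspace h. \<forall>a b.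
         g (a *\<^sub>R x + b *\<^sub>R y) z = a * g x z + b * g y z) \<and>
     (\<forall>x\<in>mspace h. \<forall>y\<in>mspace h. g x y = g y x) \<and>
     (\<forall>x\<in>mspace h. x \<noteq> 0 \<longrightarrow> g x x > 0) \<and>
     (\<forall>A\<in>AdH. \<forall>x\<in>mspace h. \<forall>y\<in>mspace h. g (A x) (A y) = g x y)"

inductive_set gen_grp :: "('a \<Rightarrow> 'a) set \<Rightarrow> ('a \<Rightarrow> 'a) set" for S where
  gen_id: "id \<in> gen_grp S"
| gen_mul: "a \<in> S \<Longrightarrow> B \<in> gen_grp S \<Longrightarrow> a \<circ> B \<in> gen_grp S"
| gen_inv: "a \<in> S \<Longrightarrow> B \<in> gen_grp S \<Longrightarrow> inv a \<circ> B \<in> gen_grp S"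

text \<open>Ad(K), K generated by H and the connected subgroup with Lie algebra k
  (the latter generated by exp(k), and Ad(exp X) = exp(ad X))\<close>
definition AdK :: "('g::euclidean_space \<Rightarrow> 'g \<Rightarrow> 'g) \<Rightarrow> ('g \<Rightarrow> 'g) set \<Rightarrow> 'g set \<Rightarrow> ('g \<Rightarrow> 'g) set" where
  "AdK br AdH k = gen_grp (AdH \<union> {op_exp (ad br X) | X. X \<in> k})"

definition submersion_metric ::
  "('g::euclidean_space \<Rightarrow> 'g \<Rightarrow> 'g) \<Rightarrow> 'g set \<Rightarrow> ('g \<Rightarrow> 'g) set \<Rightarrow> 'g set \<Rightarrow> ('g \<Rightarrow> 'g \<Rightarrow> real) \<Rightarrow> bool" where
  "submersion_metric br h AdH k g \<longleftrightarrow>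
     invariant_metric h AdH g \<and>
     (\<forall>x\<in>m_of h k. \<forall>y\<in>m_perp h k. g x y = 0) \<and>
     (\<forall>A\<in>AdK br AdH k. \<forall>y\<in>m_perp h k. \<forall>z\<in>m_perp h k. g (A y) (A z) = g y z)"

text \<open>Endomorphisms of m are represented as linear maps of g vanishing on h and preserving m.
  Their trace equals the trace of the induced map on g, computed in an orthonormal basis.\<close>
definition trace_op :: "('g::euclidean_space \<Rightarrow> 'g) \<Rightarrow> real" where
  "trace_op v = (\<Sum>b\<in>Basis. v b \<bullet> b)"

definition Sigma_set :: "'g::euclidean_space set \<Rightarrow> ('g \<Rightarrow> 'g) set \<Rightarrow> ('g \<Rightarrow> 'g) set" where
  "Sigma_set h AdH = {v. linear v \<and> (\<forall>x\<in>h. v x = 0) \<and> (\<forall>x\<in>mspace h. v x \<in> mspace h) \<and>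
      (\<forall>x\<in>mspace h. \<forall>y\<in>mspace h. v x \<bullet> y = x \<bullet> v y) \<and>
      (\<forall>A\<in>AdH. \<forall>x\<in>mspace h. v (A x) = A (v x)) \<and>
      trace_op v = 0 \<and> trace_op (v \<circ> v) = 1}"

definition gamma :: "('g::euclidean_space \<Rightarrow> 'g) \<Rightarrow> real \<Rightarrow> 'g \<Rightarrow> 'g \<Rightarrow> real" where
  "gamma v t = (\<lambda>x y. op_exp (\<lambda>z. t *\<^sub>R v z) x \<bullet> y)"

definition adH_irreducible :: "('g::euclidean_space \<Rightarrow> 'g) set \<Rightarrow> 'g set \<Rightarrow> bool" where
  "adH_irreducible AdH V \<longleftrightarrow> subspace V \<and> V \<noteq> {0} \<and> (\<forall>A\<in>AdH. A ` V \<subseteq> V) \<and>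
     (\<forall>W. subspace W \<and> W \<subseteq> V \<and> (\<forall>A\<in>AdH. A ` W \<subseteq> W) \<longrightarrow> W = {0} \<or> W = V)"

text \<open>elements of F^G (0-based list of subspaces)\<close>
definition decomp :: "'g::euclidean_space set \<Rightarrow> ('g \<Rightarrow> 'g) set \<Rightarrow> 'g set list \<Rightarrow> bool" where
  "decomp h AdH ms \<longleftrightarrow>
     (\<forall>i<length ms. adH_irreducible AdH (ms ! i)) \<and>
     (\<forall>i<length ms. \<forall>j<length ms. i \<noteq> j \<longrightarrow> (\<forall>x\<in>ms ! i. \<forall>y\<in>ms ! j. x \<bullet> y = 0)) \<and>
     span (\<Union> (set ms)) = mspace h"

definition msum :: "'g::euclidean_space set list \<Rightarrow> nat set \<Rightarrow> 'g set" where
  "msum ms I = span (\<Union>i\<in>I \<inter> {..<length ms}. ms ! i)"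

definition good_decomp :: "'g::euclidean_space set \<Rightarrow> ('g \<Rightarrow> 'g) set \<Rightarrow> ('g \<Rightarrow> 'g) \<Rightarrow> 'g set list \<Rightarrow> bool" where
  "good_decomp h AdH v ms \<longleftrightarrow> decomp h AdH ms \<and>
     (\<forall>i<length ms. \<exists>c. \<forall>x\<in>ms ! i. v x = c *\<^sub>R x)"

definition coef :: "('g::euclidean_space \<Rightarrow> 'g) \<Rightarrow> 'g set list \<Rightarrow> nat \<Rightarrow> real" where
  "coef v ms i = (SOME c. \<forall>x\<in>ms ! i. v x = c *\<^sub>R x)"

definition eigvals :: "'g::euclidean_space set \<Rightarrow> ('g \<Rightarrow> 'g) \<Rightarrow> real list" where
  "eigvals h v = sorted_list_of_set {c. \<exists>x\<in>mspace h. x \<noteq> 0 \<and> v x = c *\<^sub>R x}"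

definition Iset :: "'g::euclidean_space set \<Rightarrow> ('g \<Rightarrow> 'g) \<Rightarrow> 'g set list \<Rightarrow> nat \<Rightarrow> nat set" where
  "Iset h v ms s = {i. i < length ms \<and> coef v ms i = eigvals h v ! s}"

definition adapted_onb :: "'g::euclidean_space set list \<Rightarrow> (nat \<Rightarrow> 'g set) \<Rightarrow> bool" where
  "adapted_onb ms B \<longleftrightarrow> (\<forall>i<length ms. finite (B i) \<and> B i \<subseteq> ms ! i \<and> span (B i) = ms ! i \<and>
      pairwise orthogonal (B i) \<and> (\<forall>b\<in>B i. norm b = 1))"

text \<open>[I1 I2 I3] computed in a Q-orthonormal adapted basis (value is basis independent)\<close>
definition bracket_sum :: "('g::euclidean_space \<Rightarrow> 'g \<Rightarrow> 'g) \<Rightarrow> 'g set list \<Rightarrow> nat set \<Rightarrow> nat set \<Rightarrow> nat set \<Rightarrow> real" where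
  "bracket_sum br ms I1 I2 I3 = (let B = (SOME B. adapted_onb ms B) in
     (\<Sum>i\<in>I1 \<inter> {..<length ms}. \<Sum>j\<in>I2 \<inter> {..<length ms}. \<Sum>k\<in>I3 \<inter> {..<length ms}.
        \<Sum>a\<in>B i. \<Sum>b\<in>B j. \<Sum>c\<in>B k. (br a b \<bullet> c)\<^sup>2))"

definition W_Sigma :: "('g::euclidean_space \<Rightarrow> 'g \<Rightarrow> 'g) \<Rightarrow> 'g set \<Rightarrow> ('g \<Rightarrow> 'g) set \<Rightarrow> 'g set list \<Rightarrow> ('g \<Rightarrow> 'g) set" where
  "W_Sigma br h AdH ks = {v \<in> Sigma_set h AdH. length ks \<le> length (eigvals h v) \<and>
     (\<forall>ms. good_decomp h AdH v ms \<longrightarrow>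
        (ks ! 0 = set_sum h (msum ms (Iset h v ms 0)) \<and>
         (\<forall>q. 1 \<le> q \<and> q < length ks \<longrightarrow> ks ! q = set_sum (ks ! (q - 1)) (msum ms (Iset h v ms q)))) \<and>
        (\<forall>q<length ks. \<forall>i j k. q \<le> i \<and> i < length (eigvals h v) \<and> q \<le> j \<and> j < length (eigvals h v) \<and>
            q \<le> k \<and> k < length (eigvals h v) \<longrightarrow>
            bracket_sum br ms (Iset h v ms i) (Iset h v ms j) (Iset h v ms k) > 0 \<longrightarrow>
            eigvals h v ! i - eigvals h v ! j - eigvals h v ! k + eigvals h v ! q \<le> 0))}"

end

theory Submission
  imports Defs
begin


typedef (overloaded) ('a::euclidean_space) endo = "UNIV :: ('a \<Rightarrow>\<^sub>L 'a) set" by simp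

setup_lifting type_definition_endo

instantiation endo :: (euclidean_space) real_normed_vector
begin
lift_definition norm_endo :: "'a endo \<Rightarrow> real" is norm .
lift_definition minus_endo :: "'a endo \<Rightarrow> 'a endo \<Rightarrow> 'a endo" is "(-)" .
lift_definition plus_endo :: "'a endo \<Rightarrow> 'a endo \<Rightarrow> 'a endo" is "(+)" .
lift_definition uminus_endo :: "'a endo \<Rightarrow> 'a endo" is "uminus" .
lift_definition zero_endo :: "'a endo" is 0 .
lift_definition scaleR_endo :: "real \<Rightarrow> 'a endo \<Rightarrow> 'a endo" is scaleR .
definition dist_endo :: "'a endo \<Rightarrow> 'a endo \<Rightarrow> real" where "dist_endo a b = norm (a - b)"
definition sgn_endo :: "'a endo \<Rightarrow> 'a endo" where "sgn_endo x = scaleR (inverse (norm x)) x"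
definition "(uniformity :: ('a endo \<times> 'a endo) filter) = (INF e\<in>{0 <..}. principal {(x, y). dist x y < e})"
definition open_endo :: "'a endo set \<Rightarrow> bool"
  where "open_endo S = (\<forall>x\<in>S. \<forall>\<^sub>F (x', y) in uniformity. x' = x \<longrightarrow> y \<in> S)"
instance
  apply standard
  unfolding dist_endo_def open_endo_def sgn_endo_def uniformity_endo_def
  apply (rule refl | (transfer, force simp: norm_triangle_ineq algebra_simps))+
  done
end

instantiation endo :: (euclidean_space) real_normed_algebra_1
begin
lift_definition times_endo :: "'a endo \<Rightarrow> 'a endo \<Rightarrow> 'a endo" is "blinfun_compose" .
lift_definition one_endo :: "'a endo" is id_blinfun .
instance
  apply standard
  apply (transfer, rule blinfun_eqI, simp add: blinfun.bilinear_simps)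
  apply (transfer, rule blinfun_eqI, simp add: blinfun.bilinear_simps)
  apply (transfer, rule blinfun_eqI, simp add: blinfun.bilinear_simps)
  apply (transfer, rule blinfun_eqI, simp add: blinfun.bilinear_simps)
  apply (transfer, rule blinfun_eqI, simp add: blinfun.bilinear_simps)
  apply (transfer, rule blinfun_eqI, simp add: blinfun.bilinear_simps)
  apply (transfer, rule blinfun_eqI, simp add: blinfun.bilinear_simps)

  apply (transfer, metis norm_blinfun_id norm_zero zero_neq_one)
  apply (transfer, rule norm_blinfun_compose)
  apply (transfer, simp)
  done
end

lemma dist_endo_Rep: "dist a b = dist (Rep_endo a) (Rep_endo b)"
  unfolding dist_endo_def dist_norm by transfer simp

instance endo :: (euclidean_space) banach
proof
  fix X :: "nat \<Rightarrow> 'a endo"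
  assume "Cauchy X"
  hence "Cauchy (\<lambda>n. Rep_endo (X n))" unfolding Cauchy_def dist_endo_Rep .
  then obtain L where "(\<lambda>n. Rep_endo (X n)) \<longlonglongrightarrow> L" using convergent_eq_Cauchy convergent_def by blast
  hence "X \<longlonglongrightarrow> Abs_endo L"
    unfolding lim_sequentially dist_endo_Rep by (simp add: Abs_endo_inverse)
  thus "convergent X" unfolding convergent_def by blast
qed


definition app :: "'a::euclidean_space endo \<Rightarrow> 'a \<Rightarrow> 'a" where
  "app T x = blinfun_apply (Rep_endo T) x"

definition mk :: "('a::euclidean_space \<Rightarrow> 'a) \<Rightarrow> 'a endo" where
  "mk L = Abs_endo (Blinfun L)"

lemma app_mult: "app (S * T) x = app S (app T x)"
  unfolding app_def by transfer simp
lemma app_one: "app 1 x = x"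
  unfolding app_def by transfer simp
lemma app_power: "app (T ^ n) x = (app T ^^ n) x"
  by (induction n) (auto simp: app_mult app_one)
lemma app_mk: "linear L \<Longrightarrow> app (mk L) = L"
  unfolding app_def mk_def
  by (simp add: Abs_endo_inverse bounded_linear_Blinfun_apply linear_conv_bounded_linear)
lemma app_eqI: "(\<And>x. app S x = app T x) \<Longrightarrow> S = T"
  unfolding app_def using Rep_endo_inject blinfun_eqI by blast
lemma app_scaleR: "app (c *\<^sub>R T) x = c *\<^sub>R app T x"
  unfolding app_def by transfer (simp add: blinfun.scaleR_left)
lemma app_uminus: "app (- T) x = - app T x"
  unfolding app_def by transfer (simp add: blinfun.minus_left)
lemma app_minus: "app (S - T) x = app S x - app T x"
  unfolding app_def by transfer (simp add: blinfun.diff_left)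
lemma app_zero: "app 0 x = 0"
  unfolding app_def by transfer simp
lemma norm_Rep_endo: "norm (Rep_endo T) = norm T" by transfer simp
lemma bl_app_left: "bounded_linear (\<lambda>T. app T x)"
proof (rule bounded_linear_intro[where K="norm x"])
  fix S T :: "'a endo" and r :: real
  show "app (S + T) x = app S x + app T x" unfolding app_def plus_endo.rep_eq by (rule blinfun.add_left)
  show "app (r *\<^sub>R T) x = r *\<^sub>R app T x" by (rule app_scaleR)
  show "norm (app T x) \<le> norm T * norm x" unfolding app_def norm_Rep_endo[symmetric] by (rule norm_blinfun)
qed
lemma linear_app: "linear (app T)"
  unfolding app_def by (rule bounded_linear.linear[OF blinfun.bounded_linear_right])
lemma mk_app: "mk (app T) = T"
  by (rule app_eqI) (simp add: app_mk linear_app)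

lemma op_exp_sums: 
  assumes "linear L"
  shows "(\<lambda>n. (1 / fact n) *\<^sub>R (L ^^ n) x) sums app (exp (mk L)) x"
proof -
  have "(\<lambda>n. (mk L)^n /\<^sub>R fact n) sums exp (mk L)"
    unfolding exp_def by (rule summable_exp_generic [THEN summable_sums])
  from bounded_linear.sums[OF bl_app_left this, of x]
  show ?thesis by (simp add: app_scaleR app_power app_mk assms divide_inverse_commute)
qed

lemma op_exp_app: assumes "linear L" shows "op_exp L x = app (exp (mk L)) x"
  unfolding op_exp_def by (rule sums_unique[OF op_exp_sums[OF assms], symmetric])

lemma op_exp_fun: "linear L \<Longrightarrow> op_exp L = app (exp (mk L))"
  using op_exp_app by blast

lemma linear_op_exp: fixes L :: "'a::euclidean_space \<Rightarrow> 'a" assumes "linear L" shows "linear (op_exp L)"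
proof -
  have "op_exp L = app (exp (mk L))" by (rule op_exp_fun[OF assms])
  thus ?thesis by (simp add: linear_app)
qed


lemma mk_scale: "linear L \<Longrightarrow> mk (\<lambda>x. c *\<^sub>R L x) = c *\<^sub>R mk L"
  by (rule app_eqI) (simp add: app_mk app_scaleR linear_compose_scale_right)

lemma mk_neg: "linear L \<Longrightarrow> mk (\<lambda>x. - L x) = - mk L"
  by (rule app_eqI) (simp add: app_mk app_uminus linear_compose_neg)

lemma op_exp_inv:
  fixes L :: "'a::euclidean_space \<Rightarrow> 'a"
  assumes "linear L" shows "op_exp (\<lambda>x. - L x) (op_exp L x) = x"
proof -
  have l2: "linear (\<lambda>x. - L x)" using assms by (simp add: linear_compose_neg)
  have "exp (- mk L) * exp (mk L) = 1" using exp_minus_inverse[of "- mk L"] by simp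
  hence "app (exp (- mk L) * exp (mk L)) x = x" by (simp add: app_one)
  thus ?thesis using op_exp_app[OF assms] op_exp_app[OF l2] mk_neg[OF assms] by (simp add: app_mult)
qed

lemma op_exp_half:
  fixes L :: "'a::euclidean_space \<Rightarrow> 'a"
  assumes "linear L" shows "op_exp L x = op_exp (\<lambda>y. (1/2) *\<^sub>R L y) (op_exp (\<lambda>y. (1/2) *\<^sub>R L y) x)"
proof -
  have l2: "linear (\<lambda>y. (1/2) *\<^sub>R L y)" using assms by (simp add: linear_compose_scale_right)
  have e: "mk L = (1/2) *\<^sub>R mk L + (1/2) *\<^sub>R mk L" by (simp flip: scaleR_add_left)
  have "exp (mk L) = exp ((1/2) *\<^sub>R mk L) * exp ((1/2) *\<^sub>R mk L)"
    by (subst e, rule exp_add_commuting) simp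
  thus ?thesis using op_exp_app[OF assms] op_exp_app[OF l2] mk_scale[OF assms] by (simp add: app_mult)
qed

lemma funpow_adj:
  fixes L L' :: "'a::real_inner \<Rightarrow> 'a"
  assumes "\<And>x y. L x \<bullet> y = x \<bullet> L' y"
  shows "(L ^^ n) x \<bullet> y = x \<bullet> (L' ^^ n) y"
proof (induction n arbitrary: y)
  case 0 show ?case by simp
next
  case (Suc n)
  have "(L ^^ Suc n) x \<bullet> y = (L ^^ n) x \<bullet> L' y" by (simp add: assms)
  also have "\<dots> = x \<bullet> (L' ^^ n) (L' y)" by (rule Suc)
  also have "\<dots> = x \<bullet> (L' ^^ Suc n) y" by (simp add: funpow_Suc_right del: funpow.simps)
  finally show ?case .
qed

lemma op_exp_adj:
  fixes L L' :: "'a::euclidean_space \<Rightarrow> 'a"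
  assumes "linear L" "linear L'" "\<And>x y. L x \<bullet> y = x \<bullet> L' y"
  shows "op_exp L x \<bullet> y = x \<bullet> op_exp L' y"
proof -
  have 1: "(\<lambda>n. ((1 / fact n) *\<^sub>R (L ^^ n) x) \<bullet> y) sums (op_exp L x \<bullet> y)"
    using bounded_linear.sums[OF bounded_linear_inner_left op_exp_sums[OF assms(1)]]
    by (simp add: op_exp_app[OF assms(1)])
  have 2: "(\<lambda>n. x \<bullet> ((1 / fact n) *\<^sub>R (L' ^^ n) y)) sums (x \<bullet> op_exp L' y)"
    using bounded_linear.sums[OF bounded_linear_inner_right op_exp_sums[OF assms(2)]]
    by (simp add: op_exp_app[OF assms(2)])
  have "(\<lambda>n. ((1 / fact n) *\<^sub>R (L ^^ n) x) \<bullet> y) = (\<lambda>n. x \<bullet> ((1 / fact n) *\<^sub>R (L' ^^ n) y))"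
    using funpow_adj[OF assms(3)] by simp
  with 1 2 show ?thesis using sums_unique2 by metis
qed

lemma funpow_commute_on:
  assumes "\<forall>x\<in>S. L x \<in> S" "\<forall>x\<in>S. F (L x) = L (F x)" "x \<in> S"
  shows "(L ^^ n) x \<in> S \<and> F ((L ^^ n) x) = (L ^^ n) (F x)"
proof (induction n)
  case 0 thus ?case using assms by simp
next
  case (Suc n)
  thus ?case using assms by (simp add: funpow_Suc_right del: funpow.simps) (metis funpow_swap1)
qed

lemma op_exp_commute_on:
  fixes L F :: "'a::euclidean_space \<Rightarrow> 'a"
  assumes "linear L" "linear F" "\<forall>x\<in>S. L x \<in> S" "\<forall>x\<in>S. F (L x) = L (F x)" "x \<in> S"
  shows "F (op_exp L x) = op_exp L (F x)"
proof -
  have bF: "bounded_linear F" using assms(2) linear_conv_bounded_linear by blast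
  have 1: "(\<lambda>n. F ((1 / fact n) *\<^sub>R (L ^^ n) x)) sums F (op_exp L x)"
    using bounded_linear.sums[OF bF op_exp_sums[OF assms(1)]] by (simp add: op_exp_app[OF assms(1)])
  have 2: "(\<lambda>n. (1 / fact n) *\<^sub>R (L ^^ n) (F x)) sums op_exp L (F x)"
    using op_exp_sums[OF assms(1)] by (simp add: op_exp_app[OF assms(1)])
  have "(\<lambda>n. F ((1 / fact n) *\<^sub>R (L ^^ n) x)) = (\<lambda>n. (1 / fact n) *\<^sub>R (L ^^ n) (F x))"
    using funpow_commute_on[OF assms(3,4,5)] linear_scale[OF assms(2)] by simp
  with 1 2 show ?thesis using sums_unique2 by metis
qed

lemma op_exp_preserves:
  fixes L :: "'a::euclidean_space \<Rightarrow> 'a"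
  assumes "linear L" "subspace S" "closed S" "\<forall>x\<in>S. L x \<in> S" "x \<in> S"
  shows "op_exp L x \<in> S"
proof -
  have t: "(L ^^ n) x \<in> S" for n
    using funpow_commute_on[OF assms(4) _ assms(5), of id] by simp
  have "(\<lambda>N. \<Sum>n<N. (1 / fact n) *\<^sub>R (L ^^ n) x) \<longlonglongrightarrow> op_exp L x"
    using op_exp_sums[OF assms(1)] unfolding sums_def by (simp add: op_exp_app[OF assms(1)])
  moreover have "(\<Sum>n<N. (1 / fact n) *\<^sub>R (L ^^ n) x) \<in> S" for N
    by (intro subspace_sum[OF assms(2)] subspace_scale[OF assms(2)] t)
  ultimately show ?thesis using closed_sequentially[OF assms(3), of "\<lambda>N. \<Sum>n<N. (1 / fact n) *\<^sub>R (L ^^ n) x"] by blast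
qed

lemma comm_deriv:
  fixes T W :: "'a::euclidean_space endo"
  assumes "\<And>s. exp (s *\<^sub>R T) * W = W * exp (s *\<^sub>R T)"
  shows "T * W = W * T"
proof -
  have d1: "((\<lambda>s. exp (s *\<^sub>R T) * W) has_vector_derivative (exp (0 *\<^sub>R T) * T) * W) (at 0)"
    by (intro has_vector_derivative_mult_left exp_scaleR_has_vector_derivative_right)
  have d2: "((\<lambda>s. W * exp (s *\<^sub>R T)) has_vector_derivative W * (exp (0 *\<^sub>R T) * T)) (at 0)"
    by (intro has_vector_derivative_mult_right exp_scaleR_has_vector_derivative_right)
  have "(\<lambda>s. exp (s *\<^sub>R T) * W) = (\<lambda>s. W * exp (s *\<^sub>R T))" using assms by blast
  with d1 d2 have "(exp (0 *\<^sub>R T) * T) * W = W * (exp (0 *\<^sub>R T) * T)"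
    using vector_derivative_unique_at by metis
  thus ?thesis by simp
qed

lemma op_exp_comm_deriv:
  fixes L V :: "'a::euclidean_space \<Rightarrow> 'a"
  assumes "linear L" "linear V" "\<And>s x. V (op_exp (\<lambda>y. s *\<^sub>R L y) x) = op_exp (\<lambda>y. s *\<^sub>R L y) (V x)"
  shows "V (L x) = L (V x)"
proof -
  have "exp (s *\<^sub>R mk L) * mk V = mk V * exp (s *\<^sub>R mk L)" for s
  proof (rule app_eqI)
    fix x
    have ls: "linear (\<lambda>y. s *\<^sub>R L y)" using assms(1) by (simp add: linear_compose_scale_right)
    show "app (exp (s *\<^sub>R mk L) * mk V) x = app (mk V * exp (s *\<^sub>R mk L)) x"
      using assms(3)[of s] op_exp_app[OF ls] mk_scale[OF assms(1)] by (simp add: app_mult app_mk assms(2))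
  qed
  hence "mk L * mk V = mk V * mk L" by (rule comm_deriv)
  hence "app (mk L * mk V) x = app (mk V * mk L) x" by simp
  thus ?thesis by (simp add: app_mult app_mk assms)
qed



lemma orth_span:
  fixes x :: "'a::euclidean_space"
  assumes "\<forall>g\<in>G. x \<bullet> g = 0" "y \<in> span G"
  shows "x \<bullet> y = 0"
  using assms(2)
proof (induction rule: span_induct)
  case base show ?case using subspace_hyperplane[of x] by simp
next
  case (step g) thus ?case using assms(1) by simp
qed

lemma quad_arg:
  fixes B D :: real
  assumes "D \<ge> 0" "\<And>s. 2 * s * B \<le> s^2 * D"
  shows "B = 0"
proof -
  define e where "e = 1 / (D + 1)"
  have e: "e > 0" "e * D \<le> 1" using assms(1) by (auto simp: e_def field_simps)
  have "2 * (e * B) * B \<le> (e * B)^2 * D" by (rule assms(2))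
  hence "e * (2 * B^2) \<le> e * (e * D * B^2)" by (simp add: power2_eq_square algebra_simps)
  hence "2 * B^2 \<le> e * D * B^2" using e by (simp add: mult_le_cancel_left_pos)
  also have "\<dots> \<le> 1 * B^2" by (rule mult_right_mono) (use e in auto)
  finally have "B^2 \<le> 0" by simp
  thus ?thesis by simp
qed

lemma sym_eigvec:
  fixes v :: "'a::euclidean_space \<Rightarrow> 'a"
  assumes lv: "linear v" and sym: "\<And>x y. v x \<bullet> y = x \<bullet> v y" and sU: "subspace U"
    and nz: "U \<noteq> {0}" and inv: "\<forall>x\<in>U. v x \<in> U"
  shows "\<exists>x c. x \<in> U \<and> x \<noteq> 0 \<and> v x = c *\<^sub>R x"
proof -
  let ?K = "U \<inter> sphere 0 1"
  have cK: "compact ?K" using closed_subspace[OF sU] compact_sphere closed_Int_compact by blast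
  obtain u where u: "u \<in> U" "u \<noteq> 0" using nz sU subspace_0 by blast
  have "u /\<^sub>R norm u \<in> ?K" using u sU by (simp add: subspace_scale)
  hence neK: "?K \<noteq> {}" by blast
  have bv: "bounded_linear v" using lv linear_conv_bounded_linear by blast
  have "continuous_on ?K (\<lambda>x. v x \<bullet> x)"
    by (intro continuous_intros linear_continuous_on bv)
  then obtain x0 where x0: "x0 \<in> ?K" "\<And>y. y \<in> ?K \<Longrightarrow> v y \<bullet> y \<le> v x0 \<bullet> x0"
    using continuous_attains_sup[OF cK neK] by blast
  define c where "c = v x0 \<bullet> x0"
  have x0U: "x0 \<in> U" and nx0: "norm x0 = 1" using x0(1) by auto
  have x0x0: "x0 \<bullet> x0 = 1" using nx0 by (simp add: dot_square_norm)
  have bnd: "v z \<bullet> z \<le> c * (z \<bullet> z)" if "z \<in> U" for z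
  proof (cases "z = 0")
    case True thus ?thesis by (simp add: linear_0[OF lv])
  next
    case False
    let ?w = "z /\<^sub>R norm z"
    have "?w \<in> ?K" using that False sU by (simp add: subspace_scale)
    hence "v ?w \<bullet> ?w \<le> c" using x0(2) c_def by blast
    moreover have "v ?w \<bullet> ?w = inverse (norm z) * (inverse (norm z) * (v z \<bullet> z))"
      by (simp add: linear_scale[OF lv])
    moreover have "inverse (norm z) * (inverse (norm z) * (v z \<bullet> z)) = (v z \<bullet> z) / (norm z)^2"
      using False by (simp add: field_simps power2_eq_square)
    ultimately have "(v z \<bullet> z) / (norm z)^2 \<le> c" by simp
    hence "v z \<bullet> z \<le> c * (norm z)^2" using False by (simp add: pos_divide_le_eq)
    thus ?thesis by (simp add: dot_square_norm)
  qed
  have B0: "v x0 \<bullet> y - c * (x0 \<bullet> y) = 0" if yU: "y \<in> U" for y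
  proof (rule quad_arg)
    show "c * (y \<bullet> y) - v y \<bullet> y \<ge> 0" using bnd[OF yU] by simp
    fix s :: real
    have zU: "x0 + s *\<^sub>R y \<in> U" using x0U yU sU by (simp add: subspace_add subspace_scale)
    have "v (x0 + s *\<^sub>R y) \<bullet> (x0 + s *\<^sub>R y) = c + 2 * s * (v x0 \<bullet> y) + s^2 * (v y \<bullet> y)"
      using sym[of y x0] by (simp add: linear_add[OF lv] linear_scale[OF lv] inner_add_left inner_add_right c_def power2_eq_square inner_commute algebra_simps)
    moreover have "(x0 + s *\<^sub>R y) \<bullet> (x0 + s *\<^sub>R y) = 1 + 2 * s * (x0 \<bullet> y) + s^2 * (y \<bullet> y)"
      using x0x0 by (simp add: inner_add_left inner_add_right power2_eq_square inner_commute algebra_simps)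
    ultimately have "c + 2 * s * (v x0 \<bullet> y) + s^2 * (v y \<bullet> y) \<le> c * (1 + 2 * s * (x0 \<bullet> y) + s^2 * (y \<bullet> y))"
      using bnd[OF zU] by simp
    thus "2 * s * (v x0 \<bullet> y - c * (x0 \<bullet> y)) \<le> s^2 * (c * (y \<bullet> y) - v y \<bullet> y)"
      by (simp add: algebra_simps)
  qed
  define w where "w = v x0 - c *\<^sub>R x0"
  have wU: "w \<in> U" using x0U inv sU w_def by (simp add: subspace_diff subspace_scale)
  have "w \<bullet> w = 0" using B0[OF wU] by (simp add: w_def inner_diff_left)
  hence "v x0 = c *\<^sub>R x0" by (simp add: w_def)
  moreover have "x0 \<noteq> 0" using nx0 by auto
  ultimately show ?thesis using x0U by blast
qed



lemma decomp_exists: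
  fixes v :: "'a::euclidean_space \<Rightarrow> 'a" and AdH :: "('a \<Rightarrow> 'a) set"
  assumes lv: "linear v" and sym: "\<And>x y. v x \<bullet> y = x \<bullet> v y"
    and AH: "\<And>A. A \<in> AdH \<Longrightarrow> inv A \<in> AdH \<and> bij A \<and> (\<forall>x y. A x \<bullet> A y = x \<bullet> y) \<and> linear A"
    and comm: "\<And>A x. A \<in> AdH \<Longrightarrow> v (A x) = A (v x)"
  shows "subspace W \<Longrightarrow> (\<forall>A\<in>AdH. A ` W \<subseteq> W) \<Longrightarrow> (\<forall>x\<in>W. v x \<in> W) \<Longrightarrow>
    \<exists>ms. (\<forall>V\<in>set ms. adH_irreducible AdH V \<and> (\<exists>c. \<forall>x\<in>V. v x = c *\<^sub>R x) \<and> V \<subseteq> W) \<and>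
      (\<forall>i<length ms. \<forall>j<length ms. i \<noteq> j \<longrightarrow> (\<forall>x\<in>ms ! i. \<forall>y\<in>ms ! j. x \<bullet> y = 0)) \<and>
      span (\<Union> (set ms)) = W"
proof (induction "dim W" arbitrary: W rule: less_induct)
  case less
  note sW = less.prems(1) and iW = less.prems(2) and vW = less.prems(3)
  show ?case
  proof (cases "W = {0}")
    case True
    show ?thesis by (rule exI[of _ "[]"]) (simp add: True)
  next
    case False
    obtain x0 c where x0: "x0 \<in> W" "x0 \<noteq> 0" "v x0 = c *\<^sub>R x0"
      using sym_eigvec[OF lv sym sW False vW] by blast
    define Ec where "Ec = {x\<in>W. v x = c *\<^sub>R x}"
    have sEc: "subspace Ec" using sW unfolding Ec_def subspace_def
      by (auto simp: linear_add[OF lv] linear_scale[OF lv] linear_0[OF lv] scaleR_add_right)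
    have iEc: "\<forall>A\<in>AdH. A ` Ec \<subseteq> Ec"
    proof (intro ballI subsetI)
      fix A y assume A: "A \<in> AdH" and "y \<in> A ` Ec"
      then obtain x where x: "x \<in> Ec" "y = A x" by blast
      have "A x \<in> W" using iW A x(1) Ec_def by blast
      moreover have "v (A x) = c *\<^sub>R A x" using comm[OF A] x(1) AH[OF A] Ec_def
        by (simp add: linear_scale)
      ultimately show "y \<in> Ec" using x Ec_def by blast
    qed
    define P where "P U \<longleftrightarrow> subspace U \<and> U \<subseteq> Ec \<and> U \<noteq> {0} \<and> (\<forall>A\<in>AdH. A ` U \<subseteq> U)" for U
    have "P Ec" unfolding P_def using sEc iEc x0 Ec_def by auto
    then obtain U where PU: "P U" and minU: "\<And>U'. P U' \<Longrightarrow> dim U \<le> dim U'"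
      using ex_has_least_nat[of P Ec dim] by blast
    have sU: "subspace U" and UE: "U \<subseteq> Ec" and nzU: "U \<noteq> {0}" and iU: "\<forall>A\<in>AdH. A ` U \<subseteq> U"
      using PU P_def by auto
    have UW: "U \<subseteq> W" using UE Ec_def by auto
    have irrU: "adH_irreducible AdH U"
      unfolding adH_irreducible_def
    proof (intro conjI sU nzU iU allI impI)
      fix W' assume W': "subspace W' \<and> W' \<subseteq> U \<and> (\<forall>A\<in>AdH. A ` W' \<subseteq> W')"
      show "W' = {0} \<or> W' = U"
      proof (cases "W' = {0}")
        case False
        hence "P W'" using W' UE unfolding P_def by auto
        hence "dim U \<le> dim W'" by (rule minU)
        hence "W' = U" using subspace_dim_equal[of W' U] W' sU by auto
        thus ?thesis by simp
      qed simp
    qed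
    have cU: "\<forall>x\<in>U. v x = c *\<^sub>R x" using UE Ec_def by auto
    define W' where "W' = {x\<in>W. \<forall>u\<in>U. x \<bullet> u = 0}"
    have sW': "subspace W'" using sW unfolding W'_def subspace_def
      by (auto simp: inner_add_left)
    have iW': "\<forall>A\<in>AdH. A ` W' \<subseteq> W'"
    proof (intro ballI subsetI)
      fix A y assume A: "A \<in> AdH" and "y \<in> A ` W'"
      then obtain x where x: "x \<in> W'" "y = A x" by blast
      have "A x \<in> W" using iW A x(1) W'_def by blast
      moreover have "A x \<bullet> u = 0" if u: "u \<in> U" for u
      proof -
        have AA: "inv A \<in> AdH" "bij A" "\<forall>x y. A x \<bullet> A y = x \<bullet> y" using AH[OF A] by auto
        have "inv A u \<in> U" using iU AA(1) u by blast
        hence "x \<bullet> inv A u = 0" using x(1) W'_def by blast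
        moreover have "A (inv A u) = u" using AA(2) bij_is_surj surj_f_inv_f by metis
        ultimately show ?thesis using AA(3) by metis
      qed
      ultimately show "y \<in> W'" using x W'_def by blast
    qed
    have vW': "\<forall>x\<in>W'. v x \<in> W'"
    proof
      fix x assume x: "x \<in> W'"
      have "v x \<in> W" using vW x W'_def by blast
      moreover have "v x \<bullet> u = 0" if "u \<in> U" for u
        using sym[of x u] cU that x W'_def by simp
      ultimately show "v x \<in> W'" using W'_def by blast
    qed
    obtain u where u: "u \<in> U" "u \<noteq> 0" using nzU sU subspace_0 by blast
    have "u \<bullet> u \<noteq> 0" using u by simp
    hence "u \<notin> W'" using u W'_def by blast
    hence "W' \<subset> W" using u UW W'_def by blast
    moreover have "span W' = W'" "span W = W" using sW sW' by simp_all
    ultimately have "dim W' < dim W" using dim_psubset[of W' W] by argo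
    then obtain ms' where ms': "\<forall>V\<in>set ms'. adH_irreducible AdH V \<and> (\<exists>c. \<forall>x\<in>V. v x = c *\<^sub>R x) \<and> V \<subseteq> W'"
      "\<forall>i<length ms'. \<forall>j<length ms'. i \<noteq> j \<longrightarrow> (\<forall>x\<in>ms' ! i. \<forall>y\<in>ms' ! j. x \<bullet> y = 0)"
      "span (\<Union> (set ms')) = W'"
      using less.hyps[OF _ sW' iW' vW'] by blast
    have W'W: "W' \<subseteq> W" using W'_def by auto
    show ?thesis
    proof (rule exI[of _ "U # ms'"], intro conjI)
      show "\<forall>V\<in>set (U # ms'). adH_irreducible AdH V \<and> (\<exists>c. \<forall>x\<in>V. v x = c *\<^sub>R x) \<and> V \<subseteq> W"
      proof
        fix V assume "V \<in> set (U # ms')"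
        hence "V = U \<or> V \<in> set ms'" by simp
        thus "adH_irreducible AdH V \<and> (\<exists>c. \<forall>x\<in>V. v x = c *\<^sub>R x) \<and> V \<subseteq> W"
        proof
          assume "V = U" thus ?thesis using irrU cU UW by blast
        next
          assume "V \<in> set ms'" thus ?thesis using ms'(1) W'W by blast
        qed
      qed
      have orthU: "\<forall>x\<in>U. \<forall>y\<in>V. x \<bullet> y = 0" if "V \<in> set ms'" for V
      proof (intro ballI)
        fix x y assume x: "x \<in> U" and y: "y \<in> V"
        have "y \<in> W'" using ms'(1) that y by blast
        hence "y \<bullet> x = 0" using x W'_def by blast
        thus "x \<bullet> y = 0" by (simp add: inner_commute)
      qed
      show "\<forall>i<length (U # ms'). \<forall>j<length (U # ms'). i \<noteq> j \<longrightarrow>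
          (\<forall>x\<in>(U # ms') ! i. \<forall>y\<in>(U # ms') ! j. x \<bullet> y = 0)"
      proof (intro allI impI)
        fix i j assume ij: "i < length (U # ms')" "j < length (U # ms')" "i \<noteq> j"
        show "\<forall>x\<in>(U # ms') ! i. \<forall>y\<in>(U # ms') ! j. x \<bullet> y = 0"
        proof (cases i)
          case 0
          then obtain j' where "j = Suc j'" using ij by (cases j) auto
          hence "ms' ! j' \<in> set ms'" using ij by simp
          hence "\<forall>x\<in>U. \<forall>y\<in>ms' ! j'. x \<bullet> y = 0" by (rule orthU)
          thus ?thesis using 0 \<open>j = Suc j'\<close> by simp
        next
          case (Suc i')
          show ?thesis
          proof (cases j)
            case 0
            have i'l: "i' < length ms'" using Suc ij by simp
            hence "ms' ! i' \<in> set ms'" by simp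
            hence "\<forall>x\<in>U. \<forall>y\<in>ms' ! i'. x \<bullet> y = 0" by (rule orthU)
            hence "\<forall>x\<in>ms' ! i'. \<forall>y\<in>U. x \<bullet> y = 0" by (metis inner_commute)
            thus ?thesis using Suc 0 by simp
          next
            case (Suc j')
            thus ?thesis using \<open>i = Suc i'\<close> ms'(2) ij by auto
          qed
        qed
      qed
      show "span (\<Union> (set (U # ms'))) = W"
      proof
        have "span (\<Union> (set (U # ms'))) = span (U \<union> \<Union> (set ms'))" by simp
        also have "\<dots> \<subseteq> W"
        proof (rule span_minimal)
          have "\<forall>V\<in>set ms'. V \<subseteq> W'" using ms'(1) by blast
          thus "U \<union> \<Union> (set ms') \<subseteq> W" using UW W'W by blast
        qed (rule sW)
        finally show "span (\<Union> (set (U # ms'))) \<subseteq> W" .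
        show "W \<subseteq> span (\<Union> (set (U # ms')))"
        proof
          fix x assume xW: "x \<in> W"
          obtain y z where yz: "y \<in> span U" "\<And>w. w \<in> span U \<Longrightarrow> orthogonal z w" "x = y + z"
            using orthogonal_subspace_decomp_exists[of U x] by blast
          have spU: "span U = U" using sU by simp
          have yU: "y \<in> U" using yz(1) spU by simp
          have "z \<in> W" using xW yU UW sW yz(3) by (metis add_diff_cancel_left' subsetD subspace_diff)
          moreover have "\<forall>u\<in>U. z \<bullet> u = 0" using yz(2) spU by (simp add: orthogonal_def)
          ultimately have zW': "z \<in> W'" using W'_def by blast
          have "y \<in> span (\<Union> (set (U # ms')))" using yU by (simp add: span_base)
          moreover have "z \<in> span (\<Union> (set (U # ms')))"
            using zW' ms'(3) span_mono[of "\<Union> (set ms')" "\<Union> (set (U # ms'))"] by auto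
          ultimately show "x \<in> span (\<Union> (set (U # ms')))" using yz(3) span_add by blast
        qed
      qed
    qed
  qed
qed



lemma sub_ker: "linear (f :: 'a::real_vector \<Rightarrow> real) \<Longrightarrow> subspace {x. f x = 0}"
  by (auto simp: subspace_def linear_add linear_scale linear_0)

lemma adapted_ex:
  fixes ms :: "'a::euclidean_space set list"
  assumes "\<forall>i<length ms. subspace (ms ! i)"
  shows "\<exists>B. adapted_onb ms B"
proof -
  have "\<forall>i. \<exists>B. i < length ms \<longrightarrow> (finite B \<and> B \<subseteq> ms ! i \<and> span B = ms ! i \<and>
      pairwise orthogonal B \<and> (\<forall>b\<in>B. norm b = 1))"
  proof
    fix i show "\<exists>B. i < length ms \<longrightarrow> (finite B \<and> B \<subseteq> ms ! i \<and> span B = ms ! i \<and>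
      pairwise orthogonal B \<and> (\<forall>b\<in>B. norm b = 1))"
    proof (cases "i < length ms")
      case True
      obtain B where "B \<subseteq> ms ! i" "pairwise orthogonal B" "\<And>x. x \<in> B \<Longrightarrow> norm x = 1"
          "independent B" "span B = ms ! i"
        using orthonormal_basis_subspace[of "ms ! i"] assms True by metis
      thus ?thesis using independent_imp_finite by blast
    qed simp
  qed
  then obtain B where "\<forall>i. i < length ms \<longrightarrow> (finite (B i) \<and> B i \<subseteq> ms ! i \<and> span (B i) = ms ! i \<and>
      pairwise orthogonal (B i) \<and> (\<forall>b\<in>B i. norm b = 1))" by metis
  thus ?thesis unfolding adapted_onb_def by blast
qed

lemma bracket_pos:
  fixes br :: "'a::euclidean_space \<Rightarrow> 'a \<Rightarrow> 'a"
  assumes lie: "lie_algebra_Q br" and sub: "\<forall>i<length ms. subspace (ms ! i)"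
    and c: "c1 \<in> I1" "c1 < length ms" "c2 \<in> I2" "c2 < length ms" "c3 \<in> I3" "c3 < length ms"
    and xyz: "x \<in> ms ! c1" "y \<in> ms ! c2" "z \<in> ms ! c3" "br x y \<bullet> z \<noteq> 0"
  shows "bracket_sum br ms I1 I2 I3 > 0"
proof -
  define B0 where "B0 = (SOME B. adapted_onb ms B)"
  have aB: "adapted_onb ms B0" unfolding B0_def using someI_ex[OF adapted_ex[OF sub]] .
  have lin1: "linear (\<lambda>a. br a b)" for b using lie unfolding lie_algebra_Q_def by blast
  have lin2: "linear (br a)" for a using lie unfolding lie_algebra_Q_def by blast
  have li: "linear (\<lambda>u::'a. u \<bullet> w)" for w by (simp add: bounded_linear_inner_left bounded_linear.linear)
  have lr: "linear (\<lambda>u::'a. w \<bullet> u)" for w by (simp add: bounded_linear_inner_right bounded_linear.linear)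
  have spB: "span (B0 i) = ms ! i" if "i < length ms" for i using aB that unfolding adapted_onb_def by blast
  have "\<exists>a\<in>B0 c1. \<exists>b\<in>B0 c2. \<exists>cc\<in>B0 c3. br a b \<bullet> cc \<noteq> 0"
  proof (rule ccontr)
    assume "\<not> ?thesis"
    hence all0: "\<forall>a\<in>B0 c1. \<forall>b\<in>B0 c2. \<forall>cc\<in>B0 c3. br a b \<bullet> cc = 0" by blast
    have s1: "\<forall>b\<in>B0 c2. \<forall>cc\<in>B0 c3. br x b \<bullet> cc = 0"
    proof (intro ballI)
      fix b cc assume b: "b \<in> B0 c2" and cc: "cc \<in> B0 c3"
      have "x \<in> span (B0 c1)" using xyz(1) spB c(2) by simp
      thus "br x b \<bullet> cc = 0"
      proof (induction rule: span_induct)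
        case base show ?case using sub_ker[OF linear_compose[OF lin1 li, unfolded o_def]] by simp
      next
        case (step a) thus ?case using all0 b cc by blast
      qed
    qed
    have s2: "\<forall>cc\<in>B0 c3. br x y \<bullet> cc = 0"
    proof (intro ballI)
      fix cc assume cc: "cc \<in> B0 c3"
      have "y \<in> span (B0 c2)" using xyz(2) spB c(4) by simp
      thus "br x y \<bullet> cc = 0"
      proof (induction rule: span_induct)
        case base show ?case using sub_ker[OF linear_compose[OF lin2 li, unfolded o_def]] by simp
      next
        case (step b) thus ?case using s1 cc by blast
      qed
    qed
    have "z \<in> span (B0 c3)" using xyz(3) spB c(6) by simp
    hence "br x y \<bullet> z = 0"
    proof (induction rule: span_induct)
      case base show ?case using sub_ker[OF lr] by simp
    next
      case (step cc) thus ?case using s2 by blast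
    qed
    thus False using xyz(4) by simp
  qed
  then obtain a b cc where abc: "a \<in> B0 c1" "b \<in> B0 c2" "cc \<in> B0 c3" "br a b \<bullet> cc \<noteq> 0" by blast
  have fin: "finite (B0 i)" if "i < length ms" for i using aB that unfolding adapted_onb_def by blast
  let ?T = "\<lambda>i j k. \<Sum>a\<in>B0 i. \<Sum>b\<in>B0 j. \<Sum>c\<in>B0 k. (br a b \<bullet> c)\<^sup>2"
  have nn: "0 \<le> ?T i j k" for i j k by (intro sum_nonneg) simp
  have t1: "0 < (\<Sum>c\<in>B0 c3. (br a b \<bullet> c)\<^sup>2)"
    by (rule sum_pos2[OF fin[OF c(6)] abc(3)]) (use abc(4) in auto)
  have t2: "0 < (\<Sum>b\<in>B0 c2. \<Sum>c\<in>B0 c3. (br a b \<bullet> c)\<^sup>2)"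
    by (rule sum_pos2[where f="\<lambda>b. \<Sum>c\<in>B0 c3. (br a b \<bullet> c)\<^sup>2", OF fin[OF c(4)] abc(2) t1]) (auto intro: sum_nonneg)
  have t3: "0 < ?T c1 c2 c3"
    by (rule sum_pos2[where f="\<lambda>a. \<Sum>b\<in>B0 c2. \<Sum>c\<in>B0 c3. (br a b \<bullet> c)\<^sup>2", OF fin[OF c(2)] abc(1) t2]) (auto intro!: sum_nonneg)
  have t4: "0 < (\<Sum>k\<in>I3 \<inter> {..<length ms}. ?T c1 c2 k)"
    by (rule sum_pos2[where f="\<lambda>k. ?T c1 c2 k", OF _ _ t3]) (use c nn in auto)
  have t5: "0 < (\<Sum>j\<in>I2 \<inter> {..<length ms}. \<Sum>k\<in>I3 \<inter> {..<length ms}. ?T c1 j k)"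
    by (rule sum_pos2[where f="\<lambda>j. \<Sum>k\<in>I3 \<inter> {..<length ms}. ?T c1 j k", OF _ _ t4]) (use c nn in \<open>auto intro!: sum_nonneg\<close>)
  have t6: "0 < (\<Sum>i\<in>I1 \<inter> {..<length ms}. \<Sum>j\<in>I2 \<inter> {..<length ms}. \<Sum>k\<in>I3 \<inter> {..<length ms}. ?T i j k)"
    by (rule sum_pos2[where f="\<lambda>i. \<Sum>j\<in>I2 \<inter> {..<length ms}. \<Sum>k\<in>I3 \<inter> {..<length ms}. ?T i j k", OF _ _ t5]) (use c nn in \<open>auto intro!: sum_nonneg\<close>)
  thus ?thesis unfolding bracket_sum_def Let_def B0_def[symmetric] .
qed



locale setting =
  fixes br :: "'g::euclidean_space \<Rightarrow> 'g \<Rightarrow> 'g" and h :: "'g set" and AdH :: "('g \<Rightarrow> 'g) set"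
    and ks :: "'g set list" and v :: "'g \<Rightarrow> 'g"
  assumes HD: "homog_data br h AdH" and FL: "is_flag br h AdH ks" and VW: "v \<in> W_Sigma br h AdH ks"
begin

abbreviation "m \<equiv> mspace h"

lemma lie: "lie_algebra_Q br" using HD unfolding homog_data_def by blast
lemma sh: "subspace h" using HD unfolding homog_data_def by blast
lemma AH: "A \<in> AdH \<Longrightarrow> linear A \<and> bij A \<and> inv A \<in> AdH \<and> (\<forall>x y. A x \<bullet> A y = x \<bullet> y) \<and> A ` h = h"
  using HD unfolding homog_data_def by blast
lemma expH: "X \<in> h \<Longrightarrow> op_exp (\<lambda>Y. s *\<^sub>R br X Y) \<in> AdH"
  using HD unfolding homog_data_def by blast
lemma br_lin1: "linear (\<lambda>a. br a b)" using lie unfolding lie_algebra_Q_def by blast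
lemma br_lin2: "linear (br a)" using lie unfolding lie_algebra_Q_def by blast
lemma br_skew: "br x y = - br y x" using lie unfolding lie_algebra_Q_def by blast
lemma br_inv: "br x y \<bullet> z = x \<bullet> br y z" using lie unfolding lie_algebra_Q_def by blast
lemma br_swap: "br X Y \<bullet> Z = - (br X Z \<bullet> Y)"
proof -
  have "br X Y \<bullet> Z = X \<bullet> br Y Z" by (rule br_inv)
  also have "\<dots> = - (X \<bullet> br Z Y)" using br_skew[of Y Z] by simp
  also have "X \<bullet> br Z Y = br X Z \<bullet> Y" by (rule br_inv[symmetric])
  finally show ?thesis .
qed

lemma vS: "v \<in> Sigma_set h AdH" using VW unfolding W_Sigma_def by blast
lemma lv: "linear v" using vS unfolding Sigma_set_def by blast
lemma vh: "x \<in> h \<Longrightarrow> v x = 0" using vS unfolding Sigma_set_def by blast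
lemma vm: "x \<in> m \<Longrightarrow> v x \<in> m" using vS unfolding Sigma_set_def by blast
lemma vsm: "x \<in> m \<Longrightarrow> y \<in> m \<Longrightarrow> v x \<bullet> y = x \<bullet> v y" using vS unfolding Sigma_set_def by blast
lemma vAm: "A \<in> AdH \<Longrightarrow> x \<in> m \<Longrightarrow> v (A x) = A (v x)" using vS unfolding Sigma_set_def by blast

lemma hm_orth: "a \<in> h \<Longrightarrow> b \<in> m \<Longrightarrow> a \<bullet> b = 0"
  unfolding mspace_def by (simp add: inner_commute)

lemma decomp_hm: obtains a b where "a \<in> h" "b \<in> m" "x = a + b"
proof -
  obtain y z where yz: "y \<in> span h" "\<And>w. w \<in> span h \<Longrightarrow> orthogonal z w" "x = y + z"
    using orthogonal_subspace_decomp_exists[of h x] by blast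
  have sp: "span h = h" using sh by simp
  have "z \<in> m" using yz(2) sp unfolding mspace_def orthogonal_def by simp
  thus ?thesis using that yz sp by simp
qed

lemma sm: "subspace m" unfolding mspace_def subspace_def by (auto simp: inner_add_left)

lemma v_m_all: "v x \<in> m"
proof -
  obtain a b where ab: "a \<in> h" "b \<in> m" "x = a + b" by (rule decomp_hm)
  have "v x = v b" using ab vh linear_add[OF lv] by simp
  thus ?thesis using vm ab by simp
qed

lemma v_sym: "v x \<bullet> y = x \<bullet> v y"
proof -
  obtain a b where ab: "a \<in> h" "b \<in> m" "x = a + b" by (rule decomp_hm)
  obtain c d where cd: "c \<in> h" "d \<in> m" "y = c + d" by (rule decomp_hm)
  have vx: "v x = v b" using ab vh linear_add[OF lv] by simp
  have vy: "v y = v d" using cd vh linear_add[OF lv] by simp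
  have "v x \<bullet> y = v b \<bullet> c + v b \<bullet> d" using vx cd by (simp add: inner_add_right)
  also have "v b \<bullet> c = 0" using hm_orth[OF cd(1) vm[OF ab(2)]] by (simp add: inner_commute)
  also have "x \<bullet> v y = a \<bullet> v d + b \<bullet> v d" using vy ab by (simp add: inner_add_left)
  moreover have "a \<bullet> v d = 0" using hm_orth[OF ab(1) vm[OF cd(2)]] .
  ultimately show ?thesis using vsm[OF ab(2) cd(2)] by simp
qed

lemma A_h: "A \<in> AdH \<Longrightarrow> x \<in> h \<Longrightarrow> A x \<in> h" using AH by blast

lemma A_m: assumes A: "A \<in> AdH" and x: "x \<in> m" shows "A x \<in> m"
  unfolding mspace_def
proof (intro CollectI ballI)
  fix y assume y: "y \<in> h"
  then obtain y' where y': "y' \<in> h" "y = A y'" using AH[OF A] by blast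
  have "A x \<bullet> A y' = x \<bullet> y'" using AH[OF A] by blast
  thus "A x \<bullet> y = 0" using x y' unfolding mspace_def by simp
qed

lemma v_A: assumes A: "A \<in> AdH" shows "v (A x) = A (v x)"
proof -
  obtain a b where ab: "a \<in> h" "b \<in> m" "x = a + b" by (rule decomp_hm)
  have lA: "linear A" using AH[OF A] by blast
  have 1: "v (A x) = v (A a) + v (A b)" using ab linear_add[OF lA] linear_add[OF lv] by simp
  have 2: "v (A a) = 0" using vh A_h[OF A ab(1)] .
  have 3: "v (A b) = A (v b)" using vAm[OF A ab(2)] .
  have 4: "A (v x) = A (v b)" using ab vh linear_add[OF lv] by simp
  show ?thesis using 1 2 3 4 by simp
qed

definition E :: "real \<Rightarrow> 'g \<Rightarrow> 'g" where "E t = op_exp (\<lambda>z. t *\<^sub>R v z)"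

lemma ltv: "linear (\<lambda>z. t *\<^sub>R v z)" using lv by (simp add: linear_compose_scale_right)
lemma E_lin: "linear (E t)" unfolding E_def by (rule linear_op_exp[OF ltv])
lemma E_sym: "E t x \<bullet> y = x \<bullet> E t y"
  unfolding E_def by (rule op_exp_adj[OF ltv ltv]) (simp add: v_sym)
lemma E_A: assumes A: "A \<in> AdH" shows "E t (A x) = A (E t x)"
proof -
  have lA: "linear A" using AH[OF A] by blast
  show ?thesis unfolding E_def
    by (rule op_exp_commute_on[of _ A UNIV, symmetric]) (auto simp: ltv lA v_A[OF A] linear_scale[OF lA])
qed
lemma E_pos: assumes "x \<noteq> 0" shows "E t x \<bullet> x > 0"
proof -
  let ?L = "\<lambda>z. t *\<^sub>R v z"
  let ?H = "\<lambda>y. (1/2) *\<^sub>R ?L y"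
  have lH: "linear ?H" using ltv by (simp add: linear_compose_scale_right)
  have "E t x = op_exp ?H (op_exp ?H x)" unfolding E_def by (rule op_exp_half[OF ltv])
  hence "E t x \<bullet> x = op_exp ?H x \<bullet> op_exp ?H x"
    using op_exp_adj[OF lH lH, of "op_exp ?H x" x] by (simp add: v_sym)
  moreover have "op_exp ?H x \<noteq> 0"
  proof
    assume "op_exp ?H x = 0"
    hence "op_exp (\<lambda>x. - ?H x) (op_exp ?H x) = 0"
      using linear_0[OF linear_op_exp[of "\<lambda>x. - ?H x"]] lH by (simp add: linear_compose_neg)
    thus False using op_exp_inv[OF lH, of x] assms by simp
  qed
  ultimately show ?thesis by simp
qed

lemma gamma_E: "gamma v t = (\<lambda>x y. E t x \<bullet> y)" by (simp add: gamma_def E_def fun_eq_iff)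

lemma inv_metric: "invariant_metric h AdH (gamma v t)"
  unfolding invariant_metric_def gamma_E
proof (intro conjI ballI allI impI)
  fix x y z :: 'g and a b :: real
  show "E t (a *\<^sub>R x + b *\<^sub>R y) \<bullet> z = a * (E t x \<bullet> z) + b * (E t y \<bullet> z)" 
    using E_lin[of t] by (simp add: linear_add linear_scale inner_add_left)
  show "E t x \<bullet> y = E t y \<bullet> x" using E_sym by (simp add: inner_commute)
next
  fix x :: 'g assume "x \<noteq> 0" thus "E t x \<bullet> x > 0" by (rule E_pos)
next
  fix A x y assume A: "A \<in> AdH"
  show "E t (A x) \<bullet> A y = E t x \<bullet> y" using E_A[OF A] AH[OF A] by simp
qed

end


context setting begin

lemma ex_good: "\<exists>ms. good_decomp h AdH v ms"
proof -
  have AH': "\<And>A. A \<in> AdH \<Longrightarrow> inv A \<in> AdH \<and> bij A \<and> (\<forall>x y. A x \<bullet> A y = x \<bullet> y) \<and> linear A"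
    using AH by blast
  have iM: "\<forall>A\<in>AdH. A ` m \<subseteq> m" using A_m by blast
  have vM: "\<forall>x\<in>m. v x \<in> m" using vm by blast
  have "\<exists>ms. (\<forall>V\<in>set ms. adH_irreducible AdH V \<and> (\<exists>c. \<forall>x\<in>V. v x = c *\<^sub>R x) \<and> V \<subseteq> m) \<and>
      (\<forall>i<length ms. \<forall>j<length ms. i \<noteq> j \<longrightarrow> (\<forall>x\<in>ms ! i. \<forall>y\<in>ms ! j. x \<bullet> y = 0)) \<and>
      span (\<Union> (set ms)) = m"
    by (rule decomp_exists[OF lv v_sym AH' v_A sm iM vM])
  then obtain ms where ms: "(\<forall>V\<in>set ms. adH_irreducible AdH V \<and> (\<exists>c. \<forall>x\<in>V. v x = c *\<^sub>R x) \<and> V \<subseteq> m) \<and>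
      (\<forall>i<length ms. \<forall>j<length ms. i \<noteq> j \<longrightarrow> (\<forall>x\<in>ms ! i. \<forall>y\<in>ms ! j. x \<bullet> y = 0)) \<and>
      span (\<Union> (set ms)) = m" ..
  have "good_decomp h AdH v ms" unfolding good_decomp_def decomp_def
  proof (intro conjI)
    show "\<forall>i<length ms. adH_irreducible AdH (ms ! i)"
    proof (intro allI impI)
      fix i assume "i < length ms" hence "ms ! i \<in> set ms" by simp
      thus "adH_irreducible AdH (ms ! i)" using ms by blast
    qed
    show "\<forall>i<length ms. \<exists>c. \<forall>x\<in>ms ! i. v x = c *\<^sub>R x"
    proof (intro allI impI)
      fix i assume "i < length ms" hence "ms ! i \<in> set ms" by simp
      thus "\<exists>c. \<forall>x\<in>ms ! i. v x = c *\<^sub>R x" using ms by blast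
    qed
    show "\<forall>i<length ms. \<forall>j<length ms. i \<noteq> j \<longrightarrow> (\<forall>x\<in>ms ! i. \<forall>y\<in>ms ! j. x \<bullet> y = 0)"
      using ms by blast
    show "span (\<Union> (set ms)) = m" using ms by blast
  qed
  thus ?thesis by blast
qed

definition MS where "MS = (SOME ms. good_decomp h AdH v ms)"
lemma gMS: "good_decomp h AdH v MS" unfolding MS_def using someI_ex[OF ex_good] .

abbreviation "e \<equiv> eigvals h v"
abbreviation "I s \<equiv> Iset h v MS s"

lemma blk_irr: "i < length MS \<Longrightarrow> adH_irreducible AdH (MS ! i)"
  using gMS unfolding good_decomp_def decomp_def by blast
lemma blk_sub: "i < length MS \<Longrightarrow> subspace (MS ! i)"
  using blk_irr unfolding adH_irreducible_def by blast
lemma blk_nz: "i < length MS \<Longrightarrow> MS ! i \<noteq> {0}"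
  using blk_irr unfolding adH_irreducible_def by blast
lemma blk_orth: "i < length MS \<Longrightarrow> j < length MS \<Longrightarrow> i \<noteq> j \<Longrightarrow> x \<in> MS ! i \<Longrightarrow> y \<in> MS ! j \<Longrightarrow> x \<bullet> y = 0"
  using gMS unfolding good_decomp_def decomp_def by blast
lemma blk_span: "span (\<Union> (set MS)) = m"
  using gMS unfolding good_decomp_def decomp_def by blast
lemma blk_m: assumes "i < length MS" shows "MS ! i \<subseteq> m"
proof -
  have "MS ! i \<subseteq> \<Union> (set MS)" using assms by (simp add: Union_upper)
  also have "\<dots> \<subseteq> span (\<Union> (set MS))" by (rule span_superset)
  finally show ?thesis using blk_span by simp
qed
lemma blk_coef: assumes "i < length MS" "x \<in> MS ! i" shows "v x = coef v MS i *\<^sub>R x"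
proof -
  have "\<exists>c. \<forall>x\<in>MS ! i. v x = c *\<^sub>R x" using gMS assms(1) unfolding good_decomp_def by blast
  from someI_ex[OF this] show ?thesis using assms(2) unfolding coef_def by blast
qed

lemma perp_m: assumes x: "x \<in> m" and o: "\<And>i z. i < length MS \<Longrightarrow> z \<in> MS ! i \<Longrightarrow> x \<bullet> z = 0"
  shows "x = 0"
proof -
  have "\<forall>g\<in>\<Union> (set MS). x \<bullet> g = 0" using o by (auto simp: in_set_conv_nth)
  hence "x \<bullet> x = 0" using orth_span[of "\<Union> (set MS)" x x] x blk_span by simp
  thus ?thesis by simp
qed

definition EV where "EV = {c. \<exists>x\<in>m. x \<noteq> 0 \<and> v x = c *\<^sub>R x}"

lemma EV_sub: "EV \<subseteq> (\<lambda>i. coef v MS i) ` {..<length MS}"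
proof
  fix c assume "c \<in> EV"
  then obtain x where x: "x \<in> m" "x \<noteq> 0" "v x = c *\<^sub>R x" unfolding EV_def by blast
  show "c \<in> (\<lambda>i. coef v MS i) ` {..<length MS}"
  proof (rule ccontr)
    assume nc: "c \<notin> (\<lambda>i. coef v MS i) ` {..<length MS}"
    have "x \<bullet> z = 0" if i: "i < length MS" and z: "z \<in> MS ! i" for i z
    proof -
      have "c * (x \<bullet> z) = v x \<bullet> z" using x(3) by simp
      also have "\<dots> = x \<bullet> v z" by (rule v_sym)
      also have "\<dots> = coef v MS i * (x \<bullet> z)" using blk_coef[OF i z] by simp
      finally have "(c - coef v MS i) * (x \<bullet> z) = 0" by (simp add: algebra_simps)
      moreover have "c \<noteq> coef v MS i" using nc i by auto
      ultimately show ?thesis by simp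
    qed
    hence "x = 0" using perp_m[OF x(1)] by blast
    thus False using x(2) by simp
  qed
qed

lemma EV_fin: "finite EV" using EV_sub finite_surj by blast
lemma set_e: "set e = EV" unfolding eigvals_def EV_def[symmetric] using EV_fin by simp
lemma dist_e: "distinct e" unfolding eigvals_def by simp

lemma blk_idx: assumes "i < length MS" shows "\<exists>s<length e. i \<in> I s"
proof -
  obtain x where x: "x \<in> MS ! i" "x \<noteq> 0" using blk_nz[OF assms] blk_sub[OF assms] subspace_0 by blast
  have "coef v MS i \<in> EV" unfolding EV_def using x blk_m[OF assms] blk_coef[OF assms x(1)] by blast
  then obtain s where "s < length e" "e ! s = coef v MS i" using set_e by (metis in_set_conv_nth)
  thus ?thesis unfolding Iset_def using assms by auto
qed

lemma I_coef: "i \<in> I s \<Longrightarrow> i < length MS \<and> coef v MS i = e ! s" unfolding Iset_def by blast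

lemma len_ks: "length ks \<le> length e" using VW unfolding W_Sigma_def by blast
lemma WK0: "ks ! 0 = set_sum h (msum MS (I 0))" using VW gMS unfolding W_Sigma_def by blast
lemma WKq: "1 \<le> q \<Longrightarrow> q < length ks \<Longrightarrow> ks ! q = set_sum (ks ! (q - 1)) (msum MS (I q))"
  using VW gMS unfolding W_Sigma_def by blast
lemma Wbr: "q < length ks \<Longrightarrow> q \<le> i \<Longrightarrow> i < length e \<Longrightarrow> q \<le> j \<Longrightarrow> j < length e \<Longrightarrow>
    q \<le> k \<Longrightarrow> k < length e \<Longrightarrow> bracket_sum br MS (I i) (I j) (I k) > 0 \<Longrightarrow>
    e ! i - e ! j - e ! k + e ! q \<le> 0"
  using VW gMS unfolding W_Sigma_def by blast

definition G where "G q = h \<union> (\<Union>s\<in>{..q}. \<Union>i\<in>I s. MS ! i)"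

lemma msum_I: "msum MS (I s) = span (\<Union>i\<in>I s. MS ! i)"
proof -
  have "I s \<inter> {..<length MS} = I s" unfolding Iset_def by auto
  thus ?thesis unfolding msum_def by simp
qed

lemma set_sum_span: "set_sum (span A) (span B) = span (A \<union> B)"
  unfolding set_sum_def span_Un by simp

lemma K_span: "q < length ks \<Longrightarrow> ks ! q = span (G q)"
proof (induction q)
  case 0
  have sph: "span h = h" using sh by simp
  have "ks ! 0 = set_sum (span h) (span (\<Union>i\<in>I 0. MS ! i))" unfolding sph using WK0 msum_I by simp
  also have "\<dots> = span (G 0)" unfolding set_sum_span G_def by simp
  finally show ?case .
next
  case (Suc q)
  have "ks ! Suc q = set_sum (ks ! q) (msum MS (I (Suc q)))" using WKq[of "Suc q"] Suc.prems by simp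
  also have "\<dots> = set_sum (span (G q)) (span (\<Union>i\<in>I (Suc q). MS ! i))" using Suc msum_I by simp
  also have "\<dots> = span (G q \<union> (\<Union>i\<in>I (Suc q). MS ! i))" by (rule set_sum_span)
  also have "G q \<union> (\<Union>i\<in>I (Suc q). MS ! i) = G (Suc q)" unfolding G_def atMost_Suc by auto
  finally show ?case .
qed

end


locale setq = setting +
  fixes q :: nat
  assumes qk: "q < length ks"
begin

abbreviation "k \<equiv> ks ! q"
definition S where "S = {y. \<forall>z\<in>k. y \<bullet> z = 0}"

lemma Hk: "H_subalgebra br h AdH k" using FL qk unfolding is_flag_def by blast
lemma sk: "subspace k" using Hk unfolding H_subalgebra_def by blast
lemma brk: "x \<in> k \<Longrightarrow> y \<in> k \<Longrightarrow> br x y \<in> k" using Hk unfolding H_subalgebra_def by blast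
lemma Ak: "A \<in> AdH \<Longrightarrow> x \<in> k \<Longrightarrow> A x \<in> k" using Hk unfolding H_subalgebra_def by blast
lemma hk: "h \<subseteq> k" using Hk unfolding H_subalgebra_def by blast
lemma kG: "k = span (G q)" using K_span[OF qk] .
lemma Gk: "G q \<subseteq> k" using kG span_superset by blast
lemma blk_k: "s \<le> q \<Longrightarrow> i \<in> I s \<Longrightarrow> MS ! i \<subseteq> k"
  using Gk unfolding G_def by blast

lemma vk: assumes x: "x \<in> k" shows "v x \<in> k"
proof -
  have "x \<in> span (G q)" using x kG by simp
  thus ?thesis
  proof (induction rule: span_induct)
    case base show ?case using sk unfolding subspace_def
      by (auto simp: linear_add[OF lv] linear_scale[OF lv] linear_0[OF lv])
  next
    case (step g)
    show ?case
    proof (cases "g \<in> h")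
      case True thus ?thesis using vh sk subspace_0 by simp
    next
      case False
      then obtain s i where si: "s \<le> q" "i \<in> I s" "g \<in> MS ! i" using step unfolding G_def by blast
      have "v g = coef v MS i *\<^sub>R g" using blk_coef I_coef[OF si(2)] si(3) by blast
      moreover have "g \<in> k" using blk_k[OF si(1,2)] si(3) by blast
      ultimately show ?thesis using sk subspace_scale by simp
    qed
  qed
qed

lemma S_orth: "y \<in> S \<Longrightarrow> z \<in> k \<Longrightarrow> y \<bullet> z = 0" unfolding S_def by blast
lemma S_orth': "y \<in> S \<Longrightarrow> z \<in> k \<Longrightarrow> z \<bullet> y = 0" using S_orth inner_commute by metis
lemma sS: "subspace S" unfolding S_def subspace_def by (auto simp: inner_add_left)
lemma cS: "closed S" using closed_subspace[OF sS] .
lemma Sm: "y \<in> S \<Longrightarrow> y \<in> m" unfolding S_def mspace_def using hk by blast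
lemma vSS: "y \<in> S \<Longrightarrow> v y \<in> S" unfolding S_def using v_sym vk by simp

lemma mperp: "m_perp h k = S"
proof
  show "m_perp h k \<subseteq> S"
  proof
    fix x assume x: "x \<in> m_perp h k"
    have xm: "x \<in> m" using x unfolding m_perp_def by blast
    show "x \<in> S" unfolding S_def
    proof (intro CollectI ballI)
      fix z assume z: "z \<in> k"
      obtain a b where ab: "a \<in> h" "b \<in> m" "z = a + b" by (rule decomp_hm)
      have "b = z - a" using ab by simp
      hence "b \<in> k" using z hk ab sk subspace_diff by blast
      hence "x \<bullet> b = 0" using x ab(2) unfolding m_perp_def m_of_def by blast
      moreover have "x \<bullet> a = 0" using xm ab(1) unfolding mspace_def by blast
      ultimately show "x \<bullet> z = 0" using ab by (simp add: inner_add_right)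
    qed
  qed
  show "S \<subseteq> m_perp h k" unfolding m_perp_def m_of_def using Sm S_orth by blast
qed

lemma ES: "y \<in> S \<Longrightarrow> E t y \<in> S"
  unfolding E_def by (rule op_exp_preserves[OF ltv sS cS]) (auto simp: vSS sS subspace_scale)

lemma part2: "x \<in> m_of h k \<Longrightarrow> y \<in> m_perp h k \<Longrightarrow> gamma v t x y = 0"
  unfolding gamma_E mperp m_of_def using E_sym ES S_orth' by simp

lemma adS: assumes X: "X \<in> k" and Y: "Y \<in> S" shows "br X Y \<in> S"
  unfolding S_def
proof (intro CollectI ballI)
  fix z assume z: "z \<in> k"
  have "br X Y \<bullet> z = - (br X z \<bullet> Y)" by (rule br_swap)
  also have "br X z \<bullet> Y = 0" using S_orth'[OF Y brk[OF X z]] .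
  finally show "br X Y \<bullet> z = 0" by simp
qed

end


context setq begin

lemma blk_sub': "\<forall>i<length MS. subspace (MS ! i)" using blk_sub by blast

lemma blkS: assumes c: "c \<in> I i" and qi: "q < i" and ie: "i < length e" and Z: "Z \<in> MS ! c"
  shows "Z \<in> S"
proof -
  have cl: "c < length MS" and cc: "coef v MS c = e ! i" using I_coef[OF c] by auto
  have Zm: "Z \<in> m" using blk_m[OF cl] Z by blast
  have og: "\<forall>g\<in>G q. Z \<bullet> g = 0"
  proof
    fix g assume g: "g \<in> G q"
    show "Z \<bullet> g = 0"
    proof (cases "g \<in> h")
      case True thus ?thesis using hm_orth[OF True Zm] by (simp add: inner_commute)
    next
      case False
      then obtain s a where sa: "s \<le> q" "a \<in> I s" "g \<in> MS ! a" using g unfolding G_def by blast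
      have al: "a < length MS" and ac: "coef v MS a = e ! s" using I_coef[OF sa(2)] by auto
      have se: "s < length e" using sa(1) qi ie by simp
      have "a \<noteq> c"
      proof
        assume "a = c"
        hence "e ! s = e ! i" using ac cc by simp
        hence "s = i" using nth_eq_iff_index_eq[OF dist_e se ie] by simp
        thus False using sa(1) qi by simp
      qed
      thus ?thesis using blk_orth[OF cl al _ Z sa(3)] by simp
    qed
  qed
  show ?thesis unfolding S_def using orth_span[OF og] kG by simp
qed

lemma blk_comm:
  assumes s: "s \<le> q" and a: "a \<in> I s" and X: "X \<in> MS ! a"
    and c: "c \<in> I i" and qi: "q < i" and ie: "i < length e" and Z: "Z \<in> MS ! c"
  shows "v (br X Z) = e ! i *\<^sub>R br X Z"
proof -
  have Xk: "X \<in> k" using blk_k[OF s a] X by blast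
  have ZS: "Z \<in> S" by (rule blkS[OF c qi ie Z])
  define W where "W = br X Z"
  have WS: "W \<in> S" unfolding W_def by (rule adS[OF Xk ZS])
  define U where "U = v W - e ! i *\<^sub>R W"
  have Um: "U \<in> m" unfolding U_def using v_m_all Sm[OF WS] sm by (simp add: subspace_diff subspace_scale)
  have al: "a < length MS" using I_coef[OF a] by simp
  have cl: "c < length MS" using I_coef[OF c] by simp
  have sk: "s < length ks" using s qk by simp
  have se: "s < length e" using sk len_ks by simp
  have "U = 0"
  proof (rule perp_m[OF Um])
    fix c' Z' assume c'l: "c' < length MS" and Z': "Z' \<in> MS ! c'"
    obtain i' where i': "i' < length e" "c' \<in> I i'" using blk_idx[OF c'l] by blast
    have cc': "coef v MS c' = e ! i'" using I_coef[OF i'(2)] by simp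
    have "U \<bullet> Z' = v W \<bullet> Z' - e ! i * (W \<bullet> Z')" unfolding U_def by (simp add: inner_diff_left)
    also have "v W \<bullet> Z' = W \<bullet> v Z'" by (rule v_sym)
    also have "v Z' = e ! i' *\<^sub>R Z'" using blk_coef[OF c'l Z'] cc' by simp
    finally have UZ: "U \<bullet> Z' = (e ! i' - e ! i) * (W \<bullet> Z')" by (simp add: algebra_simps)
    show "U \<bullet> Z' = 0"
    proof (cases "i' \<le> q")
      case True
      have "Z' \<in> k" using blk_k[OF True i'(2)] Z' by blast
      thus ?thesis using UZ S_orth[OF WS] by simp
    next
      case False
      show ?thesis
      proof (cases "W \<bullet> Z' = 0")
        case True thus ?thesis using UZ by simp
      next
        case nz: False
        have h1: "br Z' Z \<bullet> X = - (W \<bullet> Z')"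
        proof -
          have "br Z' Z \<bullet> X = Z' \<bullet> br Z X" by (rule br_inv)
          also have "br Z X = - br X Z" by (rule br_skew)
          finally show ?thesis unfolding W_def by (simp add: inner_commute)
        qed
        have h2: "br Z Z' \<bullet> X = W \<bullet> Z'"
          using h1 br_skew[of Z Z'] by simp
        have b1: "bracket_sum br MS (I i') (I i) (I s) > 0"
          by (rule bracket_pos[OF lie blk_sub' i'(2) c'l c cl a al Z' Z X]) (use h1 nz in simp)
        have b2: "bracket_sum br MS (I i) (I i') (I s) > 0"
          by (rule bracket_pos[OF lie blk_sub' c cl i'(2) c'l a al Z Z' X]) (use h2 nz in simp)
        have "e ! i' - e ! i - e ! s + e ! s \<le> 0"
          by (rule Wbr[OF sk _ i'(1) _ ie _ se b1]) (use s qi False in auto)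
        moreover have "e ! i - e ! i' - e ! s + e ! s \<le> 0"
          by (rule Wbr[OF sk _ ie _ i'(1) _ se b2]) (use s qi False in auto)
        ultimately have "e ! i' = e ! i" by simp
        thus ?thesis using UZ by simp
      qed
    qed
  qed
  thus ?thesis unfolding U_def W_def by simp
qed

lemma comm_blk:
  assumes s: "s \<le> q" and a: "a \<in> I s" and X: "X \<in> MS ! a" and Y: "Y \<in> S"
  shows "v (br X Y) = br X (v Y)"
proof -
  have Xk: "X \<in> k" using blk_k[OF s a] X by blast
  have vY: "v Y \<in> S" using vSS[OF Y] .
  define U where "U = v (br X Y) - br X (v Y)"
  have Um: "U \<in> m" unfolding U_def using v_m_all Sm[OF adS[OF Xk vY]] sm by (simp add: subspace_diff)
  have "U = 0"
  proof (rule perp_m[OF Um])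
    fix c Z assume cl: "c < length MS" and Z: "Z \<in> MS ! c"
    obtain i where i: "i < length e" "c \<in> I i" using blk_idx[OF cl] by blast
    have cc: "coef v MS c = e ! i" using I_coef[OF i(2)] by simp
    have vZ: "v Z = e ! i *\<^sub>R Z" using blk_coef[OF cl Z] cc by simp
    have 1: "v (br X Y) \<bullet> Z = - (e ! i * (br X Z \<bullet> Y))"
    proof -
      have "v (br X Y) \<bullet> Z = br X Y \<bullet> v Z" by (rule v_sym)
      also have "\<dots> = e ! i * (br X Y \<bullet> Z)" using vZ by simp
      also have "br X Y \<bullet> Z = - (br X Z \<bullet> Y)" by (rule br_swap)
      finally show ?thesis by simp
    qed
    have 2: "br X (v Y) \<bullet> Z = - (v (br X Z) \<bullet> Y)"
    proof -
      have "br X (v Y) \<bullet> Z = - (br X Z \<bullet> v Y)" by (rule br_swap)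
      also have "br X Z \<bullet> v Y = v (br X Z) \<bullet> Y" by (rule v_sym[symmetric])
      finally show ?thesis .
    qed
    have UZ: "U \<bullet> Z = v (br X Z) \<bullet> Y - e ! i * (br X Z \<bullet> Y)"
      unfolding U_def using 1 2 by (simp add: inner_diff_left)
    show "U \<bullet> Z = 0"
    proof (cases "i \<le> q")
      case True
      have Zk: "Z \<in> k" using blk_k[OF True i(2)] Z by blast
      have bk: "br X Z \<in> k" by (rule brk[OF Xk Zk])
      have "v (br X Z) \<in> k" by (rule vk[OF bk])
      thus ?thesis using UZ S_orth'[OF Y bk] S_orth'[OF Y] by simp
    next
      case False
      hence "v (br X Z) = e ! i *\<^sub>R br X Z" using blk_comm[OF s a X i(2) _ i(1) Z] by simp
      thus ?thesis using UZ by simp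
    qed
  qed
  thus ?thesis unfolding U_def by simp
qed

lemma comm_h: assumes X: "X \<in> h" shows "v (br X Y) = br X (v Y)"
proof -
  have "\<And>s x. v (op_exp (\<lambda>y. s *\<^sub>R br X y) x) = op_exp (\<lambda>y. s *\<^sub>R br X y) (v x)"
    using v_A[OF expH[OF X]] by blast
  thus ?thesis using op_exp_comm_deriv[OF br_lin2[of X] lv] by blast
qed

lemma comm_k: assumes X: "X \<in> k" and Y: "Y \<in> S" shows "v (br X Y) = br X (v Y)"
proof -
  have "X \<in> span (G q)" using X kG by simp
  hence "\<forall>Y\<in>S. v (br X Y) = br X (v Y)"
  proof (induction rule: span_induct)
    case base
    show ?case unfolding subspace_def
      by (auto simp: linear_add[OF br_lin1] linear_add[OF lv] linear_scale[OF br_lin1]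
          linear_scale[OF lv] linear_0[OF br_lin1] linear_0[OF lv])
  next
    case (step g)
    show ?case
    proof (cases "g \<in> h")
      case True thus ?thesis using comm_h by simp
    next
      case False
      then obtain s a where sa: "s \<le> q" "a \<in> I s" "g \<in> MS ! a" using step unfolding G_def by blast
      thus ?thesis using comm_blk by blast
    qed
  qed
  thus ?thesis using Y by blast
qed

end


context setq begin

definition Ex where "Ex X = op_exp (ad br X)"

lemma lad: "linear (ad br X)" unfolding ad_def using br_lin2[of X] by (simp add: eta_contract_eq)
lemma lnad: "linear (\<lambda>z. - ad br X z)" using lad by (simp add: linear_compose_neg)
lemma ad_app: "ad br X y = br X y" unfolding ad_def by simp
lemma ad_neg: "(\<lambda>z. - ad br X z) = ad br (- X)"
  unfolding ad_def using linear_neg[OF br_lin1] by (simp add: fun_eq_iff)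

lemma Ex_orth: "Ex X y \<bullet> Ex X z = y \<bullet> z"
proof -
  have adj: "ad br X a \<bullet> b = a \<bullet> (\<lambda>z. - ad br X z) b" for a b
    unfolding ad_app using br_swap[of X a b] by (simp add: inner_commute)
  have "Ex X y \<bullet> Ex X z = y \<bullet> op_exp (\<lambda>z. - ad br X z) (Ex X z)"
    unfolding Ex_def by (rule op_exp_adj[OF lad lnad adj])
  also have "op_exp (\<lambda>z. - ad br X z) (Ex X z) = z" unfolding Ex_def by (rule op_exp_inv[OF lad])
  finally show ?thesis .
qed

lemma Ex_S: assumes X: "X \<in> k" and y: "y \<in> S" shows "Ex X y \<in> S"
  unfolding Ex_def by (rule op_exp_preserves[OF lad sS cS _ y]) (simp add: ad_app adS[OF X])

lemma Ex_E: assumes X: "X \<in> k" and y: "y \<in> S" shows "E t (Ex X y) = Ex X (E t y)"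
proof -
  have c1: "\<forall>x\<in>S. ad br X (E t x) = E t (ad br X x)"
  proof
    fix x assume x: "x \<in> S"
    show "ad br X (E t x) = E t (ad br X x)" unfolding E_def
    proof (rule op_exp_commute_on[OF ltv lad, where S=S and x=x])
      show "\<forall>x\<in>S. t *\<^sub>R v x \<in> S" using vSS sS subspace_scale by blast
      show "\<forall>x\<in>S. ad br X (t *\<^sub>R v x) = t *\<^sub>R v (ad br X x)"
        unfolding ad_app using comm_k[OF X] linear_scale[OF br_lin2] by simp
    qed (rule x)
  qed
  show ?thesis unfolding Ex_def
  proof (rule op_exp_commute_on[OF lad E_lin, where S=S and x=y])
    show "\<forall>x\<in>S. ad br X x \<in> S" unfolding ad_app using adS[OF X] by blast
    show "\<forall>x\<in>S. E t (ad br X x) = ad br X (E t x)" using c1 by simp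
  qed (rule y)
qed

lemma Ex_inv: "inv (Ex X) = Ex (- X)"
proof (rule inv_equality)
  fix x show "Ex (- X) (Ex X x) = x" unfolding Ex_def ad_neg[symmetric] by (rule op_exp_inv[OF lad])
next
  fix y
  have "op_exp (\<lambda>z. - ad br (- X) z) (op_exp (ad br (- X)) y) = y" by (rule op_exp_inv[OF lad])
  moreover have "(\<lambda>z. - ad br (- X) z) = ad br X" using ad_neg[of "- X"] by simp
  ultimately show "Ex X (Ex (- X) y) = y" unfolding Ex_def by simp
qed

abbreviation "Gen \<equiv> AdH \<union> {op_exp (ad br X) |X. X \<in> k}"

definition P where "P t B \<longleftrightarrow> (\<forall>y\<in>S. B y \<in> S \<and> E t (B y) = B (E t y)) \<and> (\<forall>y z. B y \<bullet> B z = y \<bullet> z)"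

lemma A_S: assumes A: "A \<in> AdH" and y: "y \<in> S" shows "A y \<in> S"
  unfolding S_def
proof (intro CollectI ballI)
  fix z assume z: "z \<in> k"
  have AA: "inv A \<in> AdH" "bij A" "\<forall>x y. A x \<bullet> A y = x \<bullet> y" using AH[OF A] by auto
  have "A (inv A z) = z" using AA(2) bij_is_surj surj_f_inv_f by metis
  hence "A y \<bullet> z = y \<bullet> inv A z" using AA(3) by metis
  also have "\<dots> = 0" using S_orth[OF y Ak[OF AA(1) z]] .
  finally show "A y \<bullet> z = 0" .
qed

lemma gen_P: assumes a: "a \<in> Gen" shows "P t a \<and> inv a \<in> Gen"
  using a
proof
  assume A: "a \<in> AdH"
  have "P t a" unfolding P_def using A_S[OF A] E_A[OF A] AH[OF A] by simp
  moreover have "inv a \<in> Gen" using AH[OF A] by blast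
  ultimately show ?thesis ..
next
  assume "a \<in> {op_exp (ad br X) |X. X \<in> k}"
  then obtain X where X: "X \<in> k" "a = Ex X" unfolding Ex_def by blast
  have "P t a" unfolding P_def using X Ex_S Ex_E Ex_orth by simp
  moreover have "- X \<in> k" using X(1) sk subspace_neg by blast
  hence "inv a \<in> Gen" using X(2) Ex_inv unfolding Ex_def by blast
  ultimately show ?thesis ..
qed

lemma AdK_P: "B \<in> AdK br AdH k \<Longrightarrow> P t B"
  unfolding AdK_def
proof (induction rule: gen_grp.induct)
  case gen_id show ?case unfolding P_def by simp
next
  case (gen_mul a B)
  have Pa: "P t a" using gen_P[OF gen_mul.hyps(1)] by blast
  show ?case using Pa gen_mul.IH unfolding P_def by simp
next
  case (gen_inv a B)
  have "inv a \<in> Gen" using gen_P[OF gen_inv.hyps(1)] by blast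
  hence Pa: "P t (inv a)" using gen_P by blast
  show ?case using Pa gen_inv.IH unfolding P_def by simp
qed

lemma final: "submersion_metric br h AdH k (gamma v t)"
  unfolding submersion_metric_def
proof (intro conjI ballI)
  show "invariant_metric h AdH (gamma v t)" by (rule inv_metric)
next
  fix x y assume "x \<in> m_of h k" "y \<in> m_perp h k"
  thus "gamma v t x y = 0" by (rule part2)
next
  fix A y z assume A: "A \<in> AdK br AdH k" and y: "y \<in> m_perp h k" and z: "z \<in> m_perp h k"
  have PA: "P t A" by (rule AdK_P[OF A])
  have yS: "y \<in> S" using y mperp by simp
  have "E t (A y) \<bullet> A z = A (E t y) \<bullet> A z" using PA yS unfolding P_def by simp
  also have "\<dots> = E t y \<bullet> z" using PA unfolding P_def by simp
  finally show "gamma v t (A y) (A z) = gamma v t y z" unfolding gamma_E .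
qed

end

theorem mainTheorem10:
  fixes br :: "'g::euclidean_space \<Rightarrow> 'g \<Rightarrow> 'g"
    and h :: "'g set" and AdH :: "('g \<Rightarrow> 'g) set"
    and ks :: "'g set list" and v :: "'g \<Rightarrow> 'g"
  assumes "homog_data br h AdH"
    and "is_flag br h AdH ks"
    and "v \<in> W_Sigma br h AdH ks"
  shows "\<forall>t::real. t > 0 \<longrightarrow> (\<forall>q<length ks. submersion_metric br h AdH (ks ! q) (gamma v t))"
proof (intro allI impI)
  fix t :: real and q assume "q < length ks"
  then interpret setq br h AdH ks v q by unfold_locales (use assms in auto)
  show "submersion_metric br h AdH (ks ! q) (gamma v t)" by (rule final)
qed


end
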